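(* Let $F_k$ denote the free $k$-algebra on two generators of degree one. (1) If $k$ has characteristic not $2$ and $\sqrt{-1}\in k$, then $F_k$ is a quotient of $A_k$ by a graded ideal. (2) $F_{\mathbb R}$ is not a quotient of $A_{\mathbb R}$ by a graded ideal.
   Context: For a field $k$, $A_k=k\langle x_1,\dots,x_7\rangle/(r_1,\dots,r_7)$, graded by $\deg x_i=1$, with $r_1=[x_2,x_3]+[x_4,x_5]+[x_6,x_7]$, $r_2=[x_3,x_1]+[x_4,x_6]+[x_7,x_5]$, $r_3=[x_1,x_2]+[x_6,x_5]+[x_7,x_4]$, $r_4=[x_5,x_1]+[x_3,x_7]+[x_6,x_2]$, $r_5=[x_1,x_4]+[x_2,x_7]+[x_3,x_6]$, $r_6=[x_7,x_1]+[x_5,x_3]+[x_2,x_4]$, $r_7=[x_1,x_6]+[x_4,x_3]+[x_5,x_2]$. *)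

theory Defs
  imports Complex_Main "HOL-Library.Poly_Mapping"
begin

text \<open>The free (noncommutative) associative k-algebra on generators of type 'g:
  finitely supported k-valued functions on words ('g list), with multiplication
  given by concatenation of words. All generators have degree one, so the degree
  of a word is its length.\<close>

type_synonym ('g, 'k) freealg = "'g list \<Rightarrow>\<^sub>0 'k"

definition fone :: "('g, 'k::field) freealg" where
  "fone = Poly_Mapping.single [] 1"

definition fgen :: "'g \<Rightarrow> ('g, 'k::field) freealg" where
  "fgen g = Poly_Mapping.single [g] 1"

definition fmul :: "('g, 'k::field) freealg \<Rightarrow> ('g, 'k) freealg \<Rightarrow> ('g, 'k) freealg" where
  "fmul p q = (\<Sum>u\<in>Poly_Mapping.keys p. \<Sum>v\<in>Poly_Mapping.keys q.
      Poly_Mapping.single (u @ v) (Poly_Mapping.lookup p u * Poly_Mapping.lookup q v))"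

definition fsmul :: "'k::field \<Rightarrow> ('g, 'k) freealg \<Rightarrow> ('g, 'k) freealg" where
  "fsmul c p = Poly_Mapping.map (\<lambda>a. c * a) p"

definition fcomm :: "('g, 'k::field) freealg \<Rightarrow> ('g, 'k) freealg \<Rightarrow> ('g, 'k) freealg" where
  "fcomm a b = fmul a b - fmul b a"

definition wordval :: "('g \<Rightarrow> ('h, 'k::field) freealg) \<Rightarrow> 'g list \<Rightarrow> ('h, 'k) freealg" where
  "wordval \<phi> w = foldr (\<lambda>g acc. fmul (\<phi> g) acc) w fone"

definition feval :: "('g \<Rightarrow> ('h, 'k::field) freealg) \<Rightarrow> ('g, 'k) freealg \<Rightarrow> ('h, 'k) freealg" where
  "feval \<phi> p = (\<Sum>w\<in>Poly_Mapping.keys p. fsmul (Poly_Mapping.lookup p w) (wordval \<phi> w))"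

definition relA :: "nat \<Rightarrow> (nat, 'k::field) freealg" where
  "relA i = (let x = fgen in
     if i = 1 then fcomm (x 2) (x 3) + fcomm (x 4) (x 5) + fcomm (x 6) (x 7)
     else if i = 2 then fcomm (x 3) (x 1) + fcomm (x 4) (x 6) + fcomm (x 7) (x 5)
     else if i = 3 then fcomm (x 1) (x 2) + fcomm (x 6) (x 5) + fcomm (x 7) (x 4)
     else if i = 4 then fcomm (x 5) (x 1) + fcomm (x 3) (x 7) + fcomm (x 6) (x 2)
     else if i = 5 then fcomm (x 1) (x 4) + fcomm (x 2) (x 7) + fcomm (x 3) (x 6)
     else if i = 6 then fcomm (x 7) (x 1) + fcomm (x 5) (x 3) + fcomm (x 2) (x 4)
     else if i = 7 then fcomm (x 1) (x 6) + fcomm (x 4) (x 3) + fcomm (x 5) (x 2)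
     else 0)"

text \<open>F_k is a quotient of A_k by a graded ideal iff there is a surjective graded algebra
  homomorphism A_k \<rightarrow> F_k, i.e. an assignment phi of the generators x_1..x_7 to
  degree-one elements of F_k = k<y_1,y_2> (generators indexed by bool) that kills all
  relations r_i and whose induced homomorphism k<x_1..x_7> \<rightarrow> F_k is onto.\<close>

definition graded_surj_A_to_F :: "(nat \<Rightarrow> (bool, 'k::field) freealg) \<Rightarrow> bool" where
  "graded_surj_A_to_F \<phi> \<longleftrightarrow>
     (\<forall>i\<in>{1..7}. \<forall>w\<in>Poly_Mapping.keys (\<phi> i). length w = 1) \<and>
     (\<forall>i\<in>{1..7}. feval \<phi> (relA i) = 0) \<and>
     (\<forall>q :: (bool, 'k) freealg. \<exists>p :: (nat, 'k) freealg.
        (\<forall>w\<in>Poly_Mapping.keys p. set w \<subseteq> {1..7}) \<and> feval \<phi> p = q)"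

definition F_graded_quotient_of_A :: "'k::field itself \<Rightarrow> bool" where
  "F_graded_quotient_of_A _ \<longleftrightarrow> (\<exists>\<phi> :: nat \<Rightarrow> (bool, 'k) freealg. graded_surj_A_to_F \<phi>)"

end

theory Submission imports Defs begin

lemma lookup_fsmul[simp]: "Poly_Mapping.lookup (fsmul c p) k = c * Poly_Mapping.lookup p k"
  unfolding fsmul_def by (simp add: map.rep_eq when_def)

lemma fsmul_zero[simp]: "fsmul 0 p = 0"
  by (rule poly_mapping_eqI) simp

lemma fsmul_add: "fsmul (a+b) p = fsmul a p + fsmul b p"
  by (rule poly_mapping_eqI) (simp add: lookup_add algebra_simps)

lemma fsmul_uminus: "fsmul (-a) p = - fsmul a p"
  by (rule poly_mapping_eqI) simp

lemma fsmul_one[simp]: "fsmul 1 p = p"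
  by (rule poly_mapping_eqI) simp

lemma fsmul_single1: "fsmul c (Poly_Mapping.single w 1) = Poly_Mapping.single w c"
  by (rule poly_mapping_eqI) (simp add: lookup_single when_def)

lemma pm_expand: "(\<Sum>a\<in>Poly_Mapping.keys m. Poly_Mapping.single a (Poly_Mapping.lookup m a)) = m"
proof (rule poly_mapping_eqI)
  fix k
  have "(\<Sum>a\<in>Poly_Mapping.keys m. Poly_Mapping.lookup (Poly_Mapping.single a (Poly_Mapping.lookup m a)) k)
      = (\<Sum>a\<in>Poly_Mapping.keys m. if a = k then Poly_Mapping.lookup m a else 0)"
    by (rule sum.cong) (auto simp: lookup_single when_def)
  also have "\<dots> = Poly_Mapping.lookup m k" by (simp add: in_keys_iff)
  finally show "Poly_Mapping.lookup (\<Sum>a\<in>Poly_Mapping.keys m. Poly_Mapping.single a (Poly_Mapping.lookup m a)) k = Poly_Mapping.lookup m k"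
    by (simp add: lookup_sum)
qed

lemma feval_superset:
  assumes "finite S" "Poly_Mapping.keys p \<subseteq> S"
  shows "feval \<phi> p = (\<Sum>w\<in>S. fsmul (Poly_Mapping.lookup p w) (wordval \<phi> w))"
  unfolding feval_def
  by (rule sum.mono_neutral_left) (use assms in \<open>auto simp: in_keys_iff\<close>)

lemma feval_add: "feval \<phi> (p + q) = feval \<phi> p + feval \<phi> q"
proof -
  let ?S = "Poly_Mapping.keys p \<union> Poly_Mapping.keys q"
  have f: "finite ?S" by simp
  have "feval \<phi> (p+q) = (\<Sum>w\<in>?S. fsmul (Poly_Mapping.lookup (p+q) w) (wordval \<phi> w))"
    by (rule feval_superset[OF f]) (simp add: keys_add)
  also have "\<dots> = (\<Sum>w\<in>?S. fsmul (Poly_Mapping.lookup p w) (wordval \<phi> w)) + (\<Sum>w\<in>?S. fsmul (Poly_Mapping.lookup q w) (wordval \<phi> w))"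
    by (simp add: lookup_add fsmul_add sum.distrib)
  also have "\<dots> = feval \<phi> p + feval \<phi> q"
    by (simp add: feval_superset[OF f])
  finally show ?thesis .
qed

lemma feval_uminus: "feval \<phi> (- p) = - feval \<phi> p"
proof -
  have "feval \<phi> (-p) = (\<Sum>w\<in>Poly_Mapping.keys p. fsmul (Poly_Mapping.lookup (-p) w) (wordval \<phi> w))"
    by (rule feval_superset) auto
  thus ?thesis by (simp add: fsmul_uminus sum_negf feval_def)
qed

lemma feval_diff: "feval \<phi> (p - q) = feval \<phi> p - feval \<phi> q"
  using feval_add[of \<phi> p "-q"] feval_uminus[of \<phi> q] by simp

lemma feval_single: "feval \<phi> (Poly_Mapping.single w c) = fsmul c (wordval \<phi> w)"
  by (subst feval_superset[of "{w}"]) auto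

lemma feval_zero[simp]: "feval \<phi> 0 = 0" by (simp add: feval_def)

lemma feval_sum: "finite A \<Longrightarrow> feval \<phi> (\<Sum>a\<in>A. f a) = (\<Sum>a\<in>A. feval \<phi> (f a))"
  by (induction A rule: finite_induct) (simp_all add: feval_add)

lemma fmul_superset:
  assumes "finite U" "Poly_Mapping.keys p \<subseteq> U" "finite V" "Poly_Mapping.keys q \<subseteq> V"
  shows "fmul p q = (\<Sum>u\<in>U. \<Sum>v\<in>V. Poly_Mapping.single (u @ v) (Poly_Mapping.lookup p u * Poly_Mapping.lookup q v))"
proof -
  have "fmul p q = (\<Sum>u\<in>U. \<Sum>v\<in>Poly_Mapping.keys q. Poly_Mapping.single (u @ v) (Poly_Mapping.lookup p u * Poly_Mapping.lookup q v))"
    unfolding fmul_def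
    by (rule sum.mono_neutral_left) (use assms in \<open>auto simp: in_keys_iff\<close>)
  also have "\<dots> = (\<Sum>u\<in>U. \<Sum>v\<in>V. Poly_Mapping.single (u @ v) (Poly_Mapping.lookup p u * Poly_Mapping.lookup q v))"
    by (rule sum.cong[OF refl], rule sum.mono_neutral_left) (use assms in \<open>auto simp: in_keys_iff\<close>)
  finally show ?thesis .
qed

lemma fmul_single: "fmul (Poly_Mapping.single u c) (Poly_Mapping.single v d) = Poly_Mapping.single (u@v) (c*d)"
  by (subst fmul_superset[of "{u}" _ "{v}"]) auto

lemma fmul_fone: "fmul p fone = p"
  by (subst fmul_superset[of "Poly_Mapping.keys p" _ "{[]}"]) (auto simp: fone_def pm_expand)

lemma keys_fmul: "Poly_Mapping.keys (fmul p q) \<subseteq> {u @ v | u v. u \<in> Poly_Mapping.keys p \<and> v \<in> Poly_Mapping.keys q}"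
proof
  fix x assume x: "x \<in> Poly_Mapping.keys (fmul p q)"
  define F where "F = (\<lambda>u. \<Sum>v\<in>Poly_Mapping.keys q.
      Poly_Mapping.single (u @ v) (Poly_Mapping.lookup p u * Poly_Mapping.lookup q v))"
  have "x \<in> (\<Union>u\<in>Poly_Mapping.keys p. Poly_Mapping.keys (F u))"
    using x unfolding fmul_def F_def by (rule subsetD[OF keys_sum])
  then obtain u where u: "u \<in> Poly_Mapping.keys p" and x1: "x \<in> Poly_Mapping.keys (F u)"
    by blast
  define G where "G = (\<lambda>v. Poly_Mapping.single (u @ v) (Poly_Mapping.lookup p u * Poly_Mapping.lookup q v))"
  have "x \<in> (\<Union>v\<in>Poly_Mapping.keys q. Poly_Mapping.keys (G v))"
    using x1 unfolding F_def G_def by (rule subsetD[OF keys_sum])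
  then obtain v where v: "v \<in> Poly_Mapping.keys q" and "x \<in> Poly_Mapping.keys (G v)"
    by blast
  then have "x = u @ v" by (simp add: G_def split: if_splits)
  with u v show "x \<in> {u @ v | u v. u \<in> Poly_Mapping.keys p \<and> v \<in> Poly_Mapping.keys q}" by blast
qed

lemma wordval_Nil[simp]: "wordval \<phi> [] = fone" by (simp add: wordval_def)
lemma wordval_Cons[simp]: "wordval \<phi> (g # w) = fmul (\<phi> g) (wordval \<phi> w)" by (simp add: wordval_def)

abbreviation sg :: "bool list \<Rightarrow> 'k::field \<Rightarrow> (bool,'k) freealg" where
  "sg \<equiv> Poly_Mapping.single"

definition Dd :: "(nat \<Rightarrow> 'k::field) \<Rightarrow> (nat \<Rightarrow> 'k) \<Rightarrow> nat \<Rightarrow> nat \<Rightarrow> 'k" where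
  "Dd s t j k = s j * t k - t j * s k"

lemma keys_lin: "Poly_Mapping.keys (sg [False] a + sg [True] b) \<subseteq> {[False],[True]}"
  by (rule order.trans[OF keys_add]) auto

lemma fmul_lin: "fmul (sg [False] a + sg [True] b) (sg [False] c + sg [True] d)
   = sg [False,False] (a*c) + sg [False,True] (a*d) + sg [True,False] (b*c) + sg [True,True] (b*d)"
  by (subst fmul_superset[OF _ keys_lin _ keys_lin])
     (simp_all add: lookup_add lookup_single when_def add_ac)

lemma feval_comm:
  assumes "\<forall>j\<in>{1..7}. \<phi> j = sg [False] (s j) + sg [True] (t j)" "j \<in> {1..7}" "k \<in> {1..7}"
  shows "feval \<phi> (fcomm (fgen j) (fgen k)) = sg [False,True] (Dd s t j k) - sg [True,False] (Dd s t j k)"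
proof -
  have eq: "fcomm (fgen j) (fgen k) = Poly_Mapping.single [j,k] 1 - Poly_Mapping.single [k,j] 1"
    by (simp add: fcomm_def fgen_def fmul_single)
  have "feval \<phi> (fcomm (fgen j) (fgen k)) = fmul (\<phi> j) (\<phi> k) - fmul (\<phi> k) (\<phi> j)"
    apply (simp only: eq feval_diff)
    apply (simp only: feval_single fsmul_one)
    apply (simp only: wordval_Cons wordval_Nil fmul_fone)
    done
  also have "\<dots> = sg [False,True] (Dd s t j k) - sg [True,False] (Dd s t j k)"
    using assms by (simp add: fmul_lin) (rule poly_mapping_eqI, simp add: lookup_add lookup_minus lookup_single when_def Dd_def algebra_simps)
  finally show ?thesis .
qed

definition Cr :: "(nat \<Rightarrow> 'k::field) \<Rightarrow> (nat \<Rightarrow> 'k) \<Rightarrow> nat \<Rightarrow> 'k" where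
  "Cr s t i = (let D = Dd s t in
     if i = 1 then D 2 3 + D 4 5 + D 6 7
     else if i = 2 then D 3 1 + D 4 6 + D 7 5
     else if i = 3 then D 1 2 + D 6 5 + D 7 4
     else if i = 4 then D 5 1 + D 3 7 + D 6 2
     else if i = 5 then D 1 4 + D 2 7 + D 3 6
     else if i = 6 then D 7 1 + D 5 3 + D 2 4
     else D 1 6 + D 4 3 + D 5 2)"

lemma comb3: "sg [False,True] a - sg [True,False] a + (sg [False,True] b - sg [True,False] b)
   + (sg [False,True] c - sg [True,False] c) = sg [False,True] (a+b+c) - sg [True,False] (a+b+c)"
  by (rule poly_mapping_eqI) (simp add: lookup_add lookup_minus lookup_single when_def)

lemma feval_rel:
  assumes "\<forall>j\<in>{1..7}. \<phi> j = sg [False] (s j) + sg [True] (t j)" "i \<in> {1..7}"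
  shows "feval \<phi> (relA i) = sg [False,True] (Cr s t i) - sg [True,False] (Cr s t i)"
proof -
  have "i = 1 \<or> i = 2 \<or> i = 3 \<or> i = 4 \<or> i = 5 \<or> i = 6 \<or> i = 7" using assms(2) by auto
  then show ?thesis
    by (elim disjE) (simp_all add: relA_def Cr_def Let_def feval_add feval_comm[OF assms(1)] comb3)
qed

lemma wordval_lin_map:
  assumes "\<phi> 1 = sg [False] 1" "\<phi> 2 = sg [True] 1"
  shows "wordval \<phi> (map (\<lambda>b. if b then 2 else 1) w) = sg w 1"
proof (induction w)
  case Nil thus ?case by (simp add: fone_def)
next
  case (Cons g w)
  have "\<phi> (if g then 2 else 1) = sg [g] 1" using assms by (cases g) auto
  with Cons show ?case by (simp add: fmul_single)
qed

lemma part1: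
  fixes i :: "'k::field"
  assumes ii: "i * i = -1"
  shows "F_graded_quotient_of_A TYPE('k)"
proof -
  define s :: "nat \<Rightarrow> 'k" where "s j = (if j = 1 then 1 else if j = 7 then i else 0)" for j
  define t :: "nat \<Rightarrow> 'k" where "t j = (if j = 2 then 1 else if j = 4 then i else 0)" for j
  define \<phi> :: "nat \<Rightarrow> (bool,'k) freealg" where "\<phi> j = sg [False] (s j) + sg [True] (t j)" for j
  have lin: "\<forall>j\<in>{1..7}. \<phi> j = sg [False] (s j) + sg [True] (t j)" by (simp add: \<phi>_def)
  have deg: "\<forall>n\<in>{1..7}. \<forall>w\<in>Poly_Mapping.keys (\<phi> n). length w = 1"
    using keys_lin unfolding \<phi>_def by fastforce
  have rel: "\<forall>n\<in>{1..7}. feval \<phi> (relA n) = 0"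
  proof
    fix n :: nat assume n: "n \<in> {1..7}"
    have "Cr s t n = 0"
    proof -
      have "n = 1 \<or> n = 2 \<or> n = 3 \<or> n = 4 \<or> n = 5 \<or> n = 6 \<or> n = 7" using n by auto
      then show ?thesis
        by (elim disjE) (simp_all add: Cr_def Dd_def s_def t_def ii)
    qed
    then show "feval \<phi> (relA n) = 0" by (simp add: feval_rel[OF lin n])
  qed
  have surj: "\<forall>q :: (bool, 'k) freealg. \<exists>p :: (nat, 'k) freealg.
        (\<forall>w\<in>Poly_Mapping.keys p. set w \<subseteq> {1..7}) \<and> feval \<phi> p = q"
  proof
    fix q :: "(bool,'k) freealg"
    define \<sigma> :: "bool \<Rightarrow> nat" where "\<sigma> b = (if b then 2 else 1)" for b
    define p :: "(nat,'k) freealg" where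
      "p = (\<Sum>w\<in>Poly_Mapping.keys q. Poly_Mapping.single (map \<sigma> w) (Poly_Mapping.lookup q w))"
    have wv: "wordval \<phi> (map \<sigma> w) = sg w 1" for w
      unfolding \<sigma>_def by (rule wordval_lin_map) (simp_all add: \<phi>_def s_def t_def)
    have "\<forall>w\<in>Poly_Mapping.keys p. set w \<subseteq> {1..7}"
    proof
      fix w assume "w \<in> Poly_Mapping.keys p"
      then have "w \<in> (\<Union>u\<in>Poly_Mapping.keys q. Poly_Mapping.keys (Poly_Mapping.single (map \<sigma> u) (Poly_Mapping.lookup q u)))"
        unfolding p_def by (rule subsetD[OF keys_sum])
      then obtain u where "w = map \<sigma> u" by (auto split: if_splits)
      then show "set w \<subseteq> {1..7}" by (auto simp: \<sigma>_def)
    qed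
    moreover have "feval \<phi> p = q"
      unfolding p_def
      by (simp add: feval_sum feval_single wv fsmul_single1 pm_expand)
    ultimately show "\<exists>p :: (nat, 'k) freealg.
        (\<forall>w\<in>Poly_Mapping.keys p. set w \<subseteq> {1..7}) \<and> feval \<phi> p = q" by blast
  qed
  have "graded_surj_A_to_F \<phi>"
    unfolding graded_surj_A_to_F_def using deg rel surj by blast
  then show ?thesis unfolding F_graded_quotient_of_A_def by blast
qed

lemma lagrange:
  fixes s t :: "nat \<Rightarrow> real"
  shows "(Cr s t 1)^2 + (Cr s t 2)^2 + (Cr s t 3)^2 + (Cr s t 4)^2 + (Cr s t 5)^2 + (Cr s t 6)^2 + (Cr s t 7)^2
   = (Dd s t 1 2)^2 + (Dd s t 1 3)^2 + (Dd s t 1 4)^2 + (Dd s t 1 5)^2 + (Dd s t 1 6)^2 + (Dd s t 1 7)^2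
   + (Dd s t 2 3)^2 + (Dd s t 2 4)^2 + (Dd s t 2 5)^2 + (Dd s t 2 6)^2 + (Dd s t 2 7)^2
   + (Dd s t 3 4)^2 + (Dd s t 3 5)^2 + (Dd s t 3 6)^2 + (Dd s t 3 7)^2
   + (Dd s t 4 5)^2 + (Dd s t 4 6)^2 + (Dd s t 4 7)^2
   + (Dd s t 5 6)^2 + (Dd s t 5 7)^2 + (Dd s t 6 7)^2"
  unfolding Cr_def Dd_def Let_def by simp algebra

lemma all_D_zero:
  fixes s t :: "nat \<Rightarrow> real"
  assumes C: "\<forall>i\<in>{1..7}. Cr s t i = 0" and j: "j \<in> {1..7}" and k: "k \<in> {1..7}"
  shows "Dd s t j k = 0"
proof -
  have "(Dd s t 1 2)^2 + (Dd s t 1 3)^2 + (Dd s t 1 4)^2 + (Dd s t 1 5)^2 + (Dd s t 1 6)^2 + (Dd s t 1 7)^2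
   + (Dd s t 2 3)^2 + (Dd s t 2 4)^2 + (Dd s t 2 5)^2 + (Dd s t 2 6)^2 + (Dd s t 2 7)^2
   + (Dd s t 3 4)^2 + (Dd s t 3 5)^2 + (Dd s t 3 6)^2 + (Dd s t 3 7)^2
   + (Dd s t 4 5)^2 + (Dd s t 4 6)^2 + (Dd s t 4 7)^2
   + (Dd s t 5 6)^2 + (Dd s t 5 7)^2 + (Dd s t 6 7)^2 = 0"
    using lagrange[of s t] C by simp
  then have sq0: "(\<Sum>x\<in>{(1,2),(1,3),(1,4),(1,5),(1,6),(1,7),(2,3),(2,4),(2,5),(2,6),(2,7),
     (3,4),(3,5),(3,6),(3,7),(4,5),(4,6),(4,7),(5,6),(5,7),(6,7)}. (Dd s t (fst x) (snd x))^2) = 0"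
    by (simp add: add.assoc)
  have "\<forall>x\<in>{(1::nat,2::nat),(1,3),(1,4),(1,5),(1,6),(1,7),(2,3),(2,4),(2,5),(2,6),(2,7),
     (3,4),(3,5),(3,6),(3,7),(4,5),(4,6),(4,7),(5,6),(5,7),(6,7)}. (Dd s t (fst x) (snd x))^2 = 0"
    using sum_nonneg_eq_0_iff[THEN iffD1, OF _ _ sq0] by simp
  then have sq: "Dd s t 1 2 = 0 \<and> Dd s t 1 3 = 0 \<and> Dd s t 1 4 = 0 \<and> Dd s t 1 5 = 0 \<and> Dd s t 1 6 = 0 \<and> Dd s t 1 7 = 0
   \<and> Dd s t 2 3 = 0 \<and> Dd s t 2 4 = 0 \<and> Dd s t 2 5 = 0 \<and> Dd s t 2 6 = 0 \<and> Dd s t 2 7 = 0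
   \<and> Dd s t 3 4 = 0 \<and> Dd s t 3 5 = 0 \<and> Dd s t 3 6 = 0 \<and> Dd s t 3 7 = 0
   \<and> Dd s t 4 5 = 0 \<and> Dd s t 4 6 = 0 \<and> Dd s t 4 7 = 0
   \<and> Dd s t 5 6 = 0 \<and> Dd s t 5 7 = 0 \<and> Dd s t 6 7 = 0"
    by simp
  have anti: "Dd s t a b = - Dd s t b a" for a b by (simp add: Dd_def)
  have diag: "Dd s t a a = 0" for a by (simp add: Dd_def)
  have lt: "Dd s t a b = 0" if a: "a \<in> {1..7}" and b: "b \<in> {1..7}" and ab: "a < b" for a b
  proof -
    have "a = 1 \<or> a = 2 \<or> a = 3 \<or> a = 4 \<or> a = 5 \<or> a = 6 \<or> a = 7" using a by auto
    moreover have "b = 1 \<or> b = 2 \<or> b = 3 \<or> b = 4 \<or> b = 5 \<or> b = 6 \<or> b = 7" using b by auto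
    ultimately show ?thesis using sq ab by (elim disjE) simp_all
  qed
  show ?thesis
  proof (cases j k rule: linorder_cases)
    case less then show ?thesis using lt j k by blast
  next
    case equal then show ?thesis using diag by simp
  next
    case greater then show ?thesis using lt[OF k j] anti[of j k] by simp
  qed
qed

lemma deg_wordval:
  assumes deg: "\<forall>i\<in>{1..7}. \<forall>w\<in>Poly_Mapping.keys (\<phi> i). length w = 1"
  shows "set w \<subseteq> {1..7} \<Longrightarrow> Poly_Mapping.keys (wordval \<phi> w) \<subseteq> {u. length u = length w}"
proof (induction w)
  case Nil then show ?case by (simp add: fone_def)
next
  case (Cons g w)
  then have "Poly_Mapping.keys (wordval \<phi> w) \<subseteq> {u. length u = length w}" and g: "g \<in> {1..7}" by auto
  then show ?case using keys_fmul[of "\<phi> g" "wordval \<phi> w"] deg g by fastforce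
qed

lemma part2: "\<not> F_graded_quotient_of_A TYPE(real)"
proof
  assume "F_graded_quotient_of_A TYPE(real)"
  then obtain \<phi> :: "nat \<Rightarrow> (bool, real) freealg" where "graded_surj_A_to_F \<phi>"
    unfolding F_graded_quotient_of_A_def by blast
  then have deg: "\<forall>i\<in>{1..7}. \<forall>w\<in>Poly_Mapping.keys (\<phi> i). length w = 1"
    and rel: "\<forall>i\<in>{1..7}. feval \<phi> (relA i) = 0"
    and surj: "\<forall>q :: (bool, real) freealg. \<exists>p :: (nat, real) freealg.
        (\<forall>w\<in>Poly_Mapping.keys p. set w \<subseteq> {1..7}) \<and> feval \<phi> p = q"
    unfolding graded_surj_A_to_F_def by auto
  define s where "s j = Poly_Mapping.lookup (\<phi> j) [False]" for j
  define t where "t j = Poly_Mapping.lookup (\<phi> j) [True]" for j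
  have lin: "\<forall>j\<in>{1..7}. \<phi> j = sg [False] (s j) + sg [True] (t j)"
  proof
    fix j :: nat assume j: "j \<in> {1..7}"
    show "\<phi> j = sg [False] (s j) + sg [True] (t j)"
    proof (rule poly_mapping_eqI)
      fix k :: "bool list"
      show "Poly_Mapping.lookup (\<phi> j) k = Poly_Mapping.lookup (sg [False] (s j) + sg [True] (t j)) k"
      proof (cases "k = [False] \<or> k = [True]")
        case True then show ?thesis by (auto simp: lookup_add lookup_single s_def t_def)
      next
        case False
        have "k \<notin> Poly_Mapping.keys (\<phi> j)"
        proof
          assume "k \<in> Poly_Mapping.keys (\<phi> j)"
          then have "length k = 1" using deg j by blast
          then obtain b where "k = [b]" by (cases k) auto
          with False show False by (cases b) auto
        qed
        with False show ?thesis by (auto simp: lookup_add lookup_single in_keys_iff when_def)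
      qed
    qed
  qed
  have C: "\<forall>i\<in>{1..7}. Cr s t i = 0"
  proof
    fix i :: nat assume i: "i \<in> {1..7}"
    have "sg [False,True] (Cr s t i) - sg [True,False] (Cr s t i) = 0"
      using feval_rel[OF lin i] rel i by simp
    then have "Poly_Mapping.lookup (sg [False,True] (Cr s t i) - sg [True,False] (Cr s t i)) [False,True] = 0"
      by simp
    then show "Cr s t i = 0" by (simp add: lookup_minus lookup_single)
  qed
  have D: "Dd s t j k = 0" if "j \<in> {1..7}" "k \<in> {1..7}" for j k
    using all_D_zero[OF C that] .
  obtain A B :: real where AB: "A \<noteq> 0 \<or> B \<noteq> 0" and lA: "\<forall>j\<in>{1..7}. A * s j + B * t j = 0"
  proof (cases "\<exists>m\<in>{1..7}. s m \<noteq> 0 \<or> t m \<noteq> 0")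
    case True
    then obtain m where m: "m \<in> {1..7}" "s m \<noteq> 0 \<or> t m \<noteq> 0" by blast
    have "\<forall>j\<in>{1..7}. t m * s j + (- s m) * t j = 0"
    proof
      fix j :: nat assume "j \<in> {1..7}"
      then have "Dd s t m j = 0" using D m by blast
      then show "t m * s j + (- s m) * t j = 0" by (simp add: Dd_def algebra_simps)
    qed
    then show ?thesis using m(2) by (intro that[of "t m" "- s m"]) auto
  next
    case False
    then have "\<forall>j\<in>{1..7}. 1 * s j + 0 * t j = 0" by auto
    then show ?thesis by (intro that[of 1 0]) auto
  qed
  define lf where "lf q = A * Poly_Mapping.lookup q [False] + B * Poly_Mapping.lookup q [True]" for q :: "(bool,real) freealg"
  have lw: "lf (wordval \<phi> w) = 0" if w: "set w \<subseteq> {1..7}" for w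
  proof (cases w)
    case Nil then show ?thesis by (simp add: lf_def fone_def lookup_single)
  next
    case (Cons j w')
    show ?thesis
    proof (cases w')
      case Nil
      with Cons w have "j \<in> {1..7}" by auto
      with lA Cons Nil show ?thesis by (simp add: lf_def fmul_fone s_def t_def)
    next
      case (Cons j' w'')
      have ks: "Poly_Mapping.keys (wordval \<phi> w) \<subseteq> {u. length u = length w}"
        by (rule deg_wordval[OF deg w])
      have "length w \<ge> 2" using Cons \<open>w = j # w'\<close> by simp
      then have "[False] \<notin> Poly_Mapping.keys (wordval \<phi> w)" "[True] \<notin> Poly_Mapping.keys (wordval \<phi> w)"
        using ks by auto
      then show ?thesis by (simp add: lf_def in_keys_iff)
    qed
  qed
  have lp: "lf (feval \<phi> p) = 0" if p: "\<forall>w\<in>Poly_Mapping.keys p. set w \<subseteq> {1..7}" for p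
  proof -
    have "lf (feval \<phi> p) = (\<Sum>w\<in>Poly_Mapping.keys p. Poly_Mapping.lookup p w * lf (wordval \<phi> w))"
      by (simp add: lf_def feval_def lookup_sum sum_distrib_left sum.distrib algebra_simps)
    also have "\<dots> = 0" using lw p by simp
    finally show ?thesis .
  qed
  obtain p1 where "\<forall>w\<in>Poly_Mapping.keys p1. set w \<subseteq> {1..7}" "feval \<phi> p1 = sg [False] 1"
    using surj by blast
  then have "lf (sg [False] 1) = 0" using lp by metis
  then have "A = 0" by (simp add: lf_def lookup_single)
  obtain p2 where "\<forall>w\<in>Poly_Mapping.keys p2. set w \<subseteq> {1..7}" "feval \<phi> p2 = sg [True] 1"
    using surj by blast
  then have "lf (sg [True] 1) = 0" using lp by metis
  then have "B = 0" by (simp add: lf_def lookup_single)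
  with \<open>A = 0\<close> AB show False by simp
qed

theorem proposition6p2:
  shows "((CHAR('k::field) \<noteq> 2 \<and> (\<exists>i::'k. i * i = -1)) \<longrightarrow> F_graded_quotient_of_A TYPE('k))
         \<and> \<not> F_graded_quotient_of_A TYPE(real)"
  using part1 part2 by blast

end
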